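(* A finite poset $P$ is a c.i.-poset if and only if it does not contain any of the following three posets as an induced subposet: $P_1$: four elements $a,b,c,d$ with $c<b<a$ and $c<d$, and no other relations (so $d$ is incomparable to $a$ and $b$); $P_2$: five elements $e,f,g,h,i$ with $f<e$, $f<g$, $h<g$, $h<i$, and no other relations; $P_3$: four elements, three pairwise incomparable elements each lying above a common fourth element, and no other relations.
   Context: A poset $Q$ is an induced subposet of $P$ if there is an injective map $\iota:Q\to P$ with $\iota(q)\le_P\iota(q')$ if and only if $q\le_Qq'$. For a finite poset $P$, a connected order ideal is a nonempty downward-closed subset whose induced Hasse diagram is connected; $\mathcal{J}_{\mathrm{conn}}(P)$ is the set of these; two connected order ideals intersect nontrivially if they are neither disjoint nor nested, and $\Pi(P)$ is the set of such unordered pairs. $P$ is a c.i.-poset if $|\mathcal{J}_{\mathrm{conn}}(P)|-|\Pi(P)|=|P|$; equivalently, for any field $k$, the presentation of the ring $R_P$ (the span in $k[x_p:p\in P]$ of the monomials $\prod_px_p^{f(p)}$ over $f:P\to\mathbb{N}$ weakly order-reversing) as a quotient of $k[U_J]_{J\in\mathcal{J}_{\mathrm{conn}}(P)}$ via $U_J\mapsto\prod_{p\in J}x_p$ is a complete intersection presentation. *)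

theory Defs
  imports Main
begin

definition finite_poset :: "'a set \<Rightarrow> ('a \<Rightarrow> 'a \<Rightarrow> bool) \<Rightarrow> bool" where
  "finite_poset S le \<longleftrightarrow> finite S \<and>
     (\<forall>x\<in>S. le x x) \<and>
     (\<forall>x\<in>S. \<forall>y\<in>S. le x y \<and> le y x \<longrightarrow> x = y) \<and>
     (\<forall>x\<in>S. \<forall>y\<in>S. \<forall>z\<in>S. le x y \<and> le y z \<longrightarrow> le x z)"

definition covers :: "'a set \<Rightarrow> ('a \<Rightarrow> 'a \<Rightarrow> bool) \<Rightarrow> 'a \<Rightarrow> 'a \<Rightarrow> bool" where
  "covers S le x y \<longleftrightarrow> x \<in> S \<and> y \<in> S \<and> le x y \<and> x \<noteq> y \<and>
     \<not> (\<exists>z\<in>S. le x z \<and> z \<noteq> x \<and> le z y \<and> z \<noteq> y)"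

definition hasse_edges_on :: "'a set \<Rightarrow> ('a \<Rightarrow> 'a \<Rightarrow> bool) \<Rightarrow> 'a set \<Rightarrow> ('a \<times> 'a) set" where
  "hasse_edges_on S le J =
     {(x, y). x \<in> J \<and> y \<in> J \<and> (covers S le x y \<or> covers S le y x)}"

definition order_ideal :: "'a set \<Rightarrow> ('a \<Rightarrow> 'a \<Rightarrow> bool) \<Rightarrow> 'a set \<Rightarrow> bool" where
  "order_ideal S le J \<longleftrightarrow> J \<subseteq> S \<and> (\<forall>x\<in>J. \<forall>y\<in>S. le y x \<longrightarrow> y \<in> J)"

definition conn_ideals :: "'a set \<Rightarrow> ('a \<Rightarrow> 'a \<Rightarrow> bool) \<Rightarrow> 'a set set" where
  "conn_ideals S le = {J. J \<noteq> {} \<and> order_ideal S le J \<and>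
     (\<forall>x\<in>J. \<forall>y\<in>J. (x, y) \<in> (hasse_edges_on S le J)\<^sup>*)}"

definition intersect_nontrivially :: "'a set \<Rightarrow> 'a set \<Rightarrow> bool" where
  "intersect_nontrivially J J' \<longleftrightarrow> J \<inter> J' \<noteq> {} \<and> \<not> J \<subseteq> J' \<and> \<not> J' \<subseteq> J"

definition Pi_pairs :: "'a set \<Rightarrow> ('a \<Rightarrow> 'a \<Rightarrow> bool) \<Rightarrow> 'a set set set" where
  "Pi_pairs S le = {{J, J'} | J J'. J \<in> conn_ideals S le \<and> J' \<in> conn_ideals S le \<and>
     intersect_nontrivially J J'}"

definition ci_poset :: "'a set \<Rightarrow> ('a \<Rightarrow> 'a \<Rightarrow> bool) \<Rightarrow> bool" where
  "ci_poset S le \<longleftrightarrow>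
     int (card (conn_ideals S le)) - int (card (Pi_pairs S le)) = int (card S)"

definition induced_subposet ::
  "'b set \<Rightarrow> ('b \<Rightarrow> 'b \<Rightarrow> bool) \<Rightarrow> 'a set \<Rightarrow> ('a \<Rightarrow> 'a \<Rightarrow> bool) \<Rightarrow> bool" where
  "induced_subposet Q leQ S le \<longleftrightarrow>
     (\<exists>\<iota>. inj_on \<iota> Q \<and> \<iota> ` Q \<subseteq> S \<and>
        (\<forall>q\<in>Q. \<forall>q'\<in>Q. le (\<iota> q) (\<iota> q') \<longleftrightarrow> leQ q q'))"

text \<open>P1: a=0, b=1, c=2, d=3 with c<b<a, c<d.\<close>
definition P1_le :: "nat \<Rightarrow> nat \<Rightarrow> bool" where
  "P1_le x y \<longleftrightarrow> x = y \<or> (x, y) \<in> {(2,1), (1,0), (2,0), (2,3)}"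

text \<open>P2: e=0, f=1, g=2, h=3, i=4 with f<e, f<g, h<g, h<i.\<close>
definition P2_le :: "nat \<Rightarrow> nat \<Rightarrow> bool" where
  "P2_le x y \<longleftrightarrow> x = y \<or> (x, y) \<in> {(1,0), (1,2), (3,2), (3,4)}"

definition P3_le :: "nat \<Rightarrow> nat \<Rightarrow> bool" where
  "P3_le x y \<longleftrightarrow> x = y \<or> (x, y) \<in> {(0,1), (0,2), (0,3)}"

end

theory Submission
  imports Defs
begin


definition dn :: "'a set \<Rightarrow> ('a\<Rightarrow>'a\<Rightarrow>bool) \<Rightarrow> 'a \<Rightarrow> 'a set" where
  "dn S le p = {x\<in>S. le x p}"
definition maxin :: "('a\<Rightarrow>'a\<Rightarrow>bool) \<Rightarrow> 'a set \<Rightarrow> 'a \<Rightarrow> bool" where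
  "maxin le A m \<longleftrightarrow> m \<in> A \<and> (\<forall>z\<in>A. le m z \<longrightarrow> z = m)"

locale fp = fixes S :: "'a set" and le :: "'a\<Rightarrow>'a\<Rightarrow>bool" assumes fp: "finite_poset S le"
begin

lemma fin: "finite S" using fp unfolding finite_poset_def by blast
lemma refl: "x\<in>S \<Longrightarrow> le x x" using fp unfolding finite_poset_def by blast
lemma antisym: "x\<in>S \<Longrightarrow> y\<in>S \<Longrightarrow> le x y \<Longrightarrow> le y x \<Longrightarrow> x = y" using fp unfolding finite_poset_def by blast
lemma trans: "x\<in>S \<Longrightarrow> y\<in>S \<Longrightarrow> z\<in>S \<Longrightarrow> le x y \<Longrightarrow> le y z \<Longrightarrow> le x z" using fp unfolding finite_poset_def by blast

lemma mem_dn: "x \<in> dn S le p \<longleftrightarrow> x \<in> S \<and> le x p" by (simp add: dn_def)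

lemma chain_conn:
  assumes K: "order_ideal S le K"
  shows "y \<in> K \<Longrightarrow> x \<in> S \<Longrightarrow> le x y \<Longrightarrow> (x,y) \<in> (hasse_edges_on S le K)\<^sup>*"
proof -
  have "\<forall>x y. card {z\<in>S. le x z \<and> le z y} = n \<longrightarrow> y \<in> K \<longrightarrow> x \<in> S \<longrightarrow> le x y \<longrightarrow> (x,y) \<in> (hasse_edges_on S le K)\<^sup>*" for n
  proof (induction n rule: less_induct)
    case (less n)
    show ?case
    proof (intro allI impI)
      fix x y assume n: "card {z\<in>S. le x z \<and> le z y} = n" and y: "y\<in>K" and x: "x\<in>S" and xy: "le x y"
      have yS: "y \<in> S" using K y unfolding order_ideal_def by auto
      have xK: "x \<in> K" using K y x xy unfolding order_ideal_def by auto
      show "(x,y) \<in> (hasse_edges_on S le K)\<^sup>*"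
      proof (cases "x = y")
        case True then show ?thesis by simp
      next
        case False
        show ?thesis
        proof (cases "covers S le x y")
          case True
          then have "(x,y) \<in> hasse_edges_on S le K" using xK y unfolding hasse_edges_on_def by auto
          then show ?thesis by auto
        next
          case False
          then obtain z where z: "z\<in>S" "le x z" "z\<noteq>x" "le z y" "z\<noteq>y"
            using \<open>x\<noteq>y\<close> xy x yS unfolding covers_def by auto
          have zK: "z \<in> K" using K y z unfolding order_ideal_def by auto
          have fin1: "finite {z\<in>S. le x z \<and> le z y}" using fin by auto
          have c1: "card {w\<in>S. le x w \<and> le w z} < n"
          proof -
            have "{w\<in>S. le x w \<and> le w z} \<subset> {z\<in>S. le x z \<and> le z y}"
            proof
              show "{w\<in>S. le x w \<and> le w z} \<subseteq> {z\<in>S. le x z \<and> le z y}" using trans z yS by blast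
              have "y \<notin> {w\<in>S. le x w \<and> le w z}" using antisym z yS by blast
              moreover have "y \<in> {z\<in>S. le x z \<and> le z y}" using yS xy refl by blast
              ultimately show "{w\<in>S. le x w \<and> le w z} \<noteq> {z\<in>S. le x z \<and> le z y}" by blast
            qed
            then show ?thesis using n fin1 psubset_card_mono by blast
          qed
          have c2: "card {w\<in>S. le z w \<and> le w y} < n"
          proof -
            have "{w\<in>S. le z w \<and> le w y} \<subset> {z\<in>S. le x z \<and> le z y}"
            proof
              show "{w\<in>S. le z w \<and> le w y} \<subseteq> {z\<in>S. le x z \<and> le z y}" using trans z x by blast
              have "x \<notin> {w\<in>S. le z w \<and> le w y}" using antisym z x by blast
              moreover have "x \<in> {z\<in>S. le x z \<and> le z y}" using x xy refl by blast
              ultimately show "{w\<in>S. le z w \<and> le w y} \<noteq> {z\<in>S. le x z \<and> le z y}" by blast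
            qed
            then show ?thesis using n fin1 psubset_card_mono by blast
          qed
          have "(x,z) \<in> (hasse_edges_on S le K)\<^sup>*" using less.IH[OF c1] zK x z by blast
          moreover have "(z,y) \<in> (hasse_edges_on S le K)\<^sup>*" using less.IH[OF c2] y z by blast
          ultimately show ?thesis by (rule rtrancl_trans)
        qed
      qed
    qed
  qed
  then show "y \<in> K \<Longrightarrow> x \<in> S \<Longrightarrow> le x y \<Longrightarrow> (x,y) \<in> (hasse_edges_on S le K)\<^sup>*" by blast
qed

lemma sym_edges: "sym (hasse_edges_on S le J)"
  unfolding sym_def hasse_edges_on_def by auto

lemma sym_path: "(x,y) \<in> (hasse_edges_on S le J)\<^sup>* \<Longrightarrow> (y,x) \<in> (hasse_edges_on S le J)\<^sup>*"
  using sym_rtrancl[OF sym_edges] by (meson symD)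

lemma dn_ideal: "order_ideal S le (dn S le p)" if "p \<in> S"
  using that trans unfolding order_ideal_def dn_def by blast

lemma dn_conn: "p \<in> S \<Longrightarrow> dn S le p \<in> conn_ideals S le"
proof -
  assume p: "p \<in> S"
  have I: "order_ideal S le (dn S le p)" using dn_ideal p .
  have pin: "p \<in> dn S le p" using p refl by (simp add: dn_def)
  have "(x,p) \<in> (hasse_edges_on S le (dn S le p))\<^sup>*" if "x \<in> dn S le p" for x
    using chain_conn[OF I pin] that by (simp add: dn_def)
  then have "(x,y) \<in> (hasse_edges_on S le (dn S le p))\<^sup>*" if "x \<in> dn S le p" "y \<in> dn S le p" for x y
    using that sym_path rtrancl_trans by metis
  then show ?thesis using I pin unfolding conn_ideals_def by blast
qed

lemma union_conn:
  assumes A: "A \<in> conn_ideals S le" and B: "B \<in> conn_ideals S le" and AB: "A \<inter> B \<noteq> {}"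
  shows "A \<union> B \<in> conn_ideals S le"
proof -
  have mA: "(hasse_edges_on S le A)\<^sup>* \<subseteq> (hasse_edges_on S le (A\<union>B))\<^sup>*"
    by (rule rtrancl_mono) (auto simp: hasse_edges_on_def)
  have mB: "(hasse_edges_on S le B)\<^sup>* \<subseteq> (hasse_edges_on S le (A\<union>B))\<^sup>*"
    by (rule rtrancl_mono) (auto simp: hasse_edges_on_def)
  obtain c where c: "c \<in> A" "c \<in> B" using AB by blast
  have toc: "(x,c) \<in> (hasse_edges_on S le (A\<union>B))\<^sup>*" if "x \<in> A \<union> B" for x
    using that c A B mA mB unfolding conn_ideals_def by blast
  have "(x,y) \<in> (hasse_edges_on S le (A\<union>B))\<^sup>*" if "x \<in> A \<union> B" "y \<in> A \<union> B" for x y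
    using toc[OF that(1)] sym_path[OF toc[OF that(2)]] rtrancl_trans by metis
  moreover have "order_ideal S le (A \<union> B)" using A B unfolding conn_ideals_def order_ideal_def by blast
  ultimately show ?thesis using c unfolding conn_ideals_def by blast
qed

lemma leave: "(a,b) \<in> E\<^sup>* \<Longrightarrow> a \<in> Y \<Longrightarrow> b \<notin> Y \<Longrightarrow> \<exists>u v. (u,v) \<in> E \<and> u \<in> Y \<and> v \<notin> Y"
  by (induction rule: rtrancl_induct) blast+

lemma cut_edge:
  assumes K: "K \<in> conn_ideals S le" and Y: "Y \<subseteq> K" "y \<in> Y" "k \<in> K" "k \<notin> Y"
    and down: "\<forall>z\<in>Y. \<forall>t\<in>K. le t z \<longrightarrow> t \<in> Y"
  shows "\<exists>u v. u \<in> Y \<and> v \<in> K \<and> v \<notin> Y \<and> le u v"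
proof -
  have "(y,k) \<in> (hasse_edges_on S le K)\<^sup>*" using K Y unfolding conn_ideals_def by blast
  then obtain u v where uv: "(u,v) \<in> hasse_edges_on S le K" "u \<in> Y" "v \<notin> Y"
    using leave Y by metis
  then have "v \<in> K" "covers S le u v \<or> covers S le v u" unfolding hasse_edges_on_def by auto
  then show ?thesis using uv down unfolding covers_def by blast
qed

lemma ex_max: assumes "A \<subseteq> S" "v \<in> A" shows "\<exists>w. maxin le A w \<and> le v w"
proof -
  have "\<exists>x. (x \<in> A \<and> le v x) \<and> (\<forall>y. (y \<in> A \<and> le v y) \<longrightarrow> card (dn S le y) \<le> card (dn S le x))"
  proof (rule ex_has_greatest_nat[where b="Suc (card S)"])
    show "v \<in> A \<and> le v v" using assms refl by blast
    show "\<forall>y. y \<in> A \<and> le v y \<longrightarrow> card (dn S le y) < Suc (card S)"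
      using fin by (simp add: dn_def le_imp_less_Suc card_mono)
  qed
  then obtain x where x: "x \<in> A" "le v x" and g: "\<forall>y. (y \<in> A \<and> le v y) \<longrightarrow> card (dn S le y) \<le> card (dn S le x)" by blast
  have "maxin le A x"
    unfolding maxin_def
  proof (intro conjI ballI impI)
    show "x \<in> A" by fact
    fix z assume z: "z \<in> A" "le x z"
    show "z = x"
    proof (rule ccontr)
      assume "z \<noteq> x"
      have xS: "x \<in> S" "z \<in> S" using x z assms by auto
      have "dn S le x \<subset> dn S le z"
      proof
        show "dn S le x \<subseteq> dn S le z" using trans xS z unfolding dn_def by blast
        have "z \<notin> dn S le x" using antisym xS z \<open>z\<noteq>x\<close> unfolding dn_def by blast
        moreover have "z \<in> dn S le z" using xS refl unfolding dn_def by blast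
        ultimately show "dn S le x \<noteq> dn S le z" by blast
      qed
      moreover have "finite (dn S le z)" using fin by (simp add: dn_def)
      ultimately have "card (dn S le x) < card (dn S le z)" using psubset_card_mono by blast
      moreover have "le v z" using trans x z xS assms by blast
      ultimately show False using g z by fastforce
    qed
  qed
  then show ?thesis using x by blast
qed

end

context fp begin

lemma mkP1:
  assumes S: "a\<in>S" "b\<in>S" "c\<in>S" "d\<in>S"
    and r: "le c b" "c\<noteq>b" "le b a" "b\<noteq>a" "le c d" "c\<noteq>d"
    and n: "\<not>le d a" "\<not>le a d" "\<not>le d b" "\<not>le b d"
  shows "induced_subposet {0::nat,1,2,3} P1_le S le"
proof -
  have ca: "le c a" using trans S r by blast
  have nbc: "\<not> le b c" using antisym S r by blast
  have nab: "\<not> le a b" using antisym S r by blast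
  have nac: "\<not> le a c" using antisym S r ca nab trans by blast
  have ndc: "\<not> le d c" using antisym S r by blast
  have dist: "a\<noteq>c" "d\<noteq>a" "d\<noteq>b" using nac n refl S r by auto
  show ?thesis unfolding induced_subposet_def P1_le_def
    apply (rule exI[of _ "\<lambda>n. [a,b,c,d] ! n"])
    using S r n ca nbc nab nac ndc dist refl by (auto simp: inj_on_def)
qed

lemma mkP3:
  assumes S: "c\<in>S" "x\<in>S" "y\<in>S" "z\<in>S"
    and r: "le c x" "le c y" "le c z" "c\<noteq>x" "c\<noteq>y" "c\<noteq>z"
    and n: "\<not>le x y" "\<not>le y x" "\<not>le x z" "\<not>le z x" "\<not>le y z" "\<not>le z y"
  shows "induced_subposet {0::nat,1,2,3} P3_le S le"
proof -
  have nn: "\<not> le x c" "\<not> le y c" "\<not> le z c" using antisym S r by blast+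
  have dist: "x\<noteq>y" "x\<noteq>z" "y\<noteq>z" using n refl S by auto
  show ?thesis unfolding induced_subposet_def P3_le_def
    apply (rule exI[of _ "\<lambda>n. [c,x,y,z] ! n"])
    using S r n nn dist refl by (auto simp: inj_on_def)
qed

lemma mkP2:
  assumes S: "e\<in>S" "f\<in>S" "g\<in>S" "h\<in>S" "i\<in>S"
    and r: "le f e" "le f g" "le h g" "le h i" "f\<noteq>e" "f\<noteq>g" "h\<noteq>g" "h\<noteq>i"
    and n: "\<not>le e g" "\<not>le g e" "\<not>le e i" "\<not>le i e" "\<not>le g i" "\<not>le i g"
      "\<not>le f h" "\<not>le h f" "\<not>le f i" "\<not>le h e"
  shows "induced_subposet {0::nat,1,2,3,4} P2_le S le"
proof -
  have nn: "\<not> le e f" "\<not> le g f" "\<not> le g h" "\<not> le i h" using antisym S r by blast+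
  have nn2: "\<not> le i f" "\<not> le e h" using trans S r n by blast+
  have dist: "e\<noteq>g" "e\<noteq>i" "g\<noteq>i" "f\<noteq>h" "f\<noteq>i" "h\<noteq>e" using n refl S by auto
  show ?thesis unfolding induced_subposet_def P2_le_def
    apply (rule exI[of _ "\<lambda>n. [e,f,g,h,i] ! n"])
    using S r n nn nn2 dist refl by (auto simp: inj_on_def)
qed

end

context fp begin

lemma ci_sub: "K \<in> conn_ideals S le \<Longrightarrow> K \<subseteq> S"
  unfolding conn_ideals_def order_ideal_def by blast
lemma ci_down: "K \<in> conn_ideals S le \<Longrightarrow> x \<in> K \<Longrightarrow> y \<in> S \<Longrightarrow> le y x \<Longrightarrow> y \<in> K"
  unfolding conn_ideals_def order_ideal_def by blast

lemma step1:
  assumes A: "A \<in> conn_ideals S le" and B: "B \<in> conn_ideals S le" and nAB: "\<not> A \<subseteq> B"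
    and y: "maxin le A y" and m: "m \<in> A \<union> B" and ym: "le y m" "m \<noteq> y"
  shows "induced_subposet {0::nat,1,2,3} P1_le S le"
proof -
  have AS: "A \<subseteq> S" using ci_sub A .
  have BS: "B \<subseteq> S" using ci_sub B .
  have mA: "m \<notin> A" using y ym unfolding maxin_def by blast
  then have mB: "m \<in> B" using m by blast
  have mS: "m \<in> S" using mB BS by blast
  define Y where "Y = {z\<in>A. \<exists>x. maxin le A x \<and> le z x \<and> le x m}"
  have yS: "y \<in> S" using y AS unfolding maxin_def by blast
  have yY: "y \<in> Y" using y ym refl yS unfolding Y_def maxin_def by blast
  have "\<exists>k. k \<in> A \<and> k \<notin> Y"
  proof (rule ccontr)
    assume "\<not> ?thesis"
    then have "\<forall>z\<in>A. le z m" unfolding Y_def maxin_def using trans AS mS by blast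
    then have "A \<subseteq> B" using ci_down[OF B mB] AS by blast
    then show False using nAB by blast
  qed
  then obtain k where k: "k \<in> A" "k \<notin> Y" by blast
  have down: "\<forall>z\<in>Y. \<forall>t\<in>A. le t z \<longrightarrow> t \<in> Y"
    unfolding Y_def maxin_def using trans AS by blast
  obtain u v where uv: "u \<in> Y" "v \<in> A" "v \<notin> Y" "le u v"
    using cut_edge[OF A _ yY k down] Y_def by blast
  obtain x where x: "maxin le A x" "le u x" "le x m" "u \<in> A" using uv(1) unfolding Y_def by blast
  obtain w where w: "maxin le A w" "le v w" using ex_max[OF AS uv(2)] by blast
  have xS: "x \<in> S" "w \<in> S" "u \<in> S" "v \<in> S" using x w AS uv unfolding maxin_def by auto
  have nwm: "\<not> le w m" using w uv x trans xS mS unfolding Y_def maxin_def by blast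
  have xw: "x \<noteq> w" using nwm x by blast
  have ux: "u \<noteq> x" using x uv unfolding maxin_def Y_def by blast
  have xm: "x \<noteq> m" using x mA unfolding maxin_def by blast
  have uw: "le u w" using trans xS uv w by blast
  have uw': "u \<noteq> w" using uw ux x w xS antisym unfolding maxin_def by metis
  have nxw: "\<not> le x w" "\<not> le w x" using x w xw unfolding maxin_def by blast+
  have nmw: "\<not> le m w" using ci_down[OF A, of w m] w mA mS unfolding maxin_def by blast
  show ?thesis
    using mkP1[of m x u w] xS mS x xm ux uw uw' nwm nmw nxw by blast
qed

lemma lemD:
  assumes n2: "\<not> induced_subposet {0::nat,1,2,3,4} P2_le S le"
    and n3: "\<not> induced_subposet {0::nat,1,2,3} P3_le S le"
    and S: "m1\<in>S" "m2\<in>S" "m3\<in>S" "f\<in>S" "h\<in>S"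
    and n: "\<not>le m1 m2" "\<not>le m2 m1" "\<not>le m1 m3" "\<not>le m3 m1" "\<not>le m2 m3" "\<not>le m3 m2"
    and r: "le f m1" "le f m2" "le h m2" "le h m3"
  shows False
proof -
  have fd: "f \<noteq> m1" "f \<noteq> m2" "h \<noteq> m2" "h \<noteq> m3" using r n by auto
  show False
  proof (cases "le f m3")
    case True
    have "f \<noteq> m3" using True r n by auto
    then show False using mkP3[of f m1 m2 m3] S r True fd n n3 by blast
  next
    case False
    show False
    proof (cases "le h m1")
      case True
      have "h \<noteq> m1" using True r n by auto
      then show False using mkP3[of h m1 m2 m3] S r True fd n n3 by blast
    next
      case F2: False
      have "\<not> le f h" using False trans S r by blast
      moreover have "\<not> le h f" using F2 trans S r by blast
      ultimately show False using mkP2[of m1 f m2 h m3] S r fd n n2 False F2 by blast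
    qed
  qed
qed

end

context fp begin

lemma Fp:
  assumes K: "K \<in> conn_ideals S le" and X: "X \<subseteq> {x. maxin le K x}" "x0 \<in> X"
    and k: "maxin le K k" "k \<notin> X"
  shows "\<exists>x\<in>X. \<exists>w. maxin le K w \<and> w \<notin> X \<and> (\<exists>u\<in>S. le u x \<and> le u w)"
proof -
  have KS: "K \<subseteq> S" using ci_sub K .
  define Y where "Y = {z\<in>K. \<exists>x\<in>X. le z x}"
  have x0: "x0 \<in> K" using X unfolding maxin_def by blast
  have x0Y: "x0 \<in> Y" using x0 X KS refl unfolding Y_def by blast
  have kY: "k \<notin> Y" using k X unfolding Y_def maxin_def by blast
  have kK: "k \<in> K" using k unfolding maxin_def by blast
  have down: "\<forall>z\<in>Y. \<forall>t\<in>K. le t z \<longrightarrow> t \<in> Y"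
    unfolding Y_def using trans KS X unfolding maxin_def by blast
  obtain u v where uv: "u \<in> Y" "v \<in> K" "v \<notin> Y" "le u v"
    using cut_edge[OF K _ x0Y kK kY down] Y_def by blast
  obtain x where x: "x \<in> X" "le u x" using uv unfolding Y_def by blast
  obtain w where w: "maxin le K w" "le v w" using ex_max[OF KS uv(2)] by blast
  have wX: "w \<notin> X" using w uv unfolding Y_def by blast
  have S': "u \<in> S" "v \<in> S" "w \<in> S" using uv w KS unfolding Y_def maxin_def by auto
  have "le u w" using trans S' uv w by blast
  then show ?thesis using x w wX S' by blast
qed

lemma principal_pair:
  assumes n1: "\<not> induced_subposet {0::nat,1,2,3} P1_le S le"
    and n2: "\<not> induced_subposet {0::nat,1,2,3,4} P2_le S le"
    and n3: "\<not> induced_subposet {0::nat,1,2,3} P3_le S le"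
    and A: "A \<in> conn_ideals S le" and B: "B \<in> conn_ideals S le"
    and ne: "intersect_nontrivially A B"
  shows "\<exists>a. A = dn S le a \<and> maxin le (A\<union>B) a"
proof -
  have AS: "A \<subseteq> S" using ci_sub A .
  have BS: "B \<subseteq> S" using ci_sub B .
  have nAB: "\<not> A \<subseteq> B" "\<not> B \<subseteq> A" "A \<inter> B \<noteq> {}" using ne unfolding intersect_nontrivially_def by auto
  have mJA: "maxin le (A\<union>B) x" if xA: "maxin le A x" for x
    unfolding maxin_def
  proof (intro conjI ballI impI)
    show "x \<in> A \<union> B" using xA unfolding maxin_def by blast
    fix z assume "z \<in> A \<union> B" "le x z"
    show "z = x"
    proof (rule ccontr)
      assume "z \<noteq> x"
      then have "induced_subposet {0::nat,1,2,3} P1_le S le"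
        using step1[OF A B nAB(1) xA \<open>z \<in> A \<union> B\<close> \<open>le x z\<close>] by blast
      then show False using n1 by blast
    qed
  qed
  have mJB: "maxin le (A\<union>B) x" if xB: "maxin le B x" for x
    unfolding maxin_def
  proof (intro conjI ballI impI)
    show "x \<in> A \<union> B" using xB unfolding maxin_def by blast
    fix z assume "z \<in> A \<union> B" "le x z"
    then have zz: "z \<in> B \<union> A" by blast
    show "z = x"
    proof (rule ccontr)
      assume "z \<noteq> x"
      then have "induced_subposet {0::nat,1,2,3} P1_le S le"
        using step1[OF B A nAB(2) xB zz \<open>le x z\<close>] by blast
      then show False using n1 by blast
    qed
  qed
  have JS: "A \<union> B \<subseteq> S" using AS BS by blast
  have D': False if DH: "maxin le (A\<union>B) x" "maxin le (A\<union>B) y" "maxin le (A\<union>B) z"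
    "x \<noteq> y" "y \<noteq> z" "x \<noteq> z" "\<exists>u\<in>S. le u x \<and> le u y" "\<exists>u\<in>S. le u y \<and> le u z" for x y z
  proof -
    have inc: "\<not> le p q" if "maxin le (A\<union>B) p" "maxin le (A\<union>B) q" "p \<noteq> q" for p q
      using that unfolding maxin_def by blast
    obtain f where f: "f\<in>S" "le f x" "le f y" using DH(7) by blast
    obtain h where h: "h \<in> S" "le h y" "le h z" using DH(8) by blast
    have xyzS: "x \<in> S" "y \<in> S" "z \<in> S" using DH(1-3) JS unfolding maxin_def by auto
    have "\<not>le x y" "\<not>le y x" "\<not>le x z" "\<not>le z x" "\<not>le y z" "\<not>le z y"
      using inc[OF DH(1) DH(2) DH(4)] inc[OF DH(2) DH(1)] inc[OF DH(1) DH(3) DH(6)] inc[OF DH(3) DH(1)]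
        inc[OF DH(2) DH(3) DH(5)] inc[OF DH(3) DH(2)] DH(4-6) by auto
    from lemD[OF n2 n3 xyzS f(1) h(1) this f(2,3) h(2,3)] show False .
  qed
  have D2: False if "maxin le (A\<union>B) x" "maxin le (A\<union>B) y" "maxin le (A\<union>B) z"
    "x \<noteq> y" "y \<noteq> z" "x \<noteq> z" "\<exists>u\<in>S. le u y \<and> le u x" "\<exists>u\<in>S. le u y \<and> le u z" for x y z
  proof -
    have "\<exists>u\<in>S. le u x \<and> le u y" using that(7) by blast
    then show False using D'[OF that(1-6) _ that(8)] by blast
  qed
  obtain t where t: "t \<in> A" "t \<notin> B" using nAB by blast
  obtain a1 where a1: "maxin le A a1" "le t a1" using ex_max[OF AS t(1)] by blast
  have a1A: "a1 \<in> A" using a1 unfolding maxin_def by blast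
  have a1B: "a1 \<notin> B"
  proof
    assume "a1 \<in> B" then have "t \<in> B" using ci_down[OF B, of a1 t] AS t a1 by blast
    then show False using t by blast
  qed
  obtain s where s: "s \<in> B" "s \<notin> A" using nAB by blast
  obtain b1 where b1: "maxin le B b1" "le s b1" using ex_max[OF BS s(1)] by blast
  have b1A: "b1 \<notin> A"
  proof
    assume "b1 \<in> A" then have "s \<in> A" using ci_down[OF A, of b1 s] BS s b1 by blast
    then show False using s by blast
  qed
  have uniq: "a2 = a1" if a2: "maxin le A a2" for a2
  proof (rule ccontr)
    assume a21: "a2 \<noteq> a1"
    have "{a1} \<subseteq> {x. maxin le A x}" using a1 by blast
    from Fp[OF A this _ a2] a21
    obtain a' where a': "maxin le A a'" "a' \<noteq> a1" "\<exists>u\<in>S. le u a1 \<and> le u a'"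
      by blast
    have JA1: "maxin le (A\<union>B) a1" using mJA a1 by blast
    have JA': "maxin le (A\<union>B) a'" using mJA a' by blast
    have MA: "a3 \<in> {a1, a'}" if a3: "maxin le A a3" for a3
    proof (rule ccontr)
      assume na3: "a3 \<notin> {a1,a'}"
      have "{a1,a'} \<subseteq> {x. maxin le A x}" using a1 a' by blast
      from Fp[OF A this _ a3 na3]
      obtain x w where xw: "x \<in> {a1,a'}" "maxin le A w" "w \<notin> {a1,a'}" "\<exists>u\<in>S. le u x \<and> le u w"
        by blast
      have Jw: "maxin le (A\<union>B) w" using mJA xw(2) by blast
      show False
      proof (cases "x = a1")
        case True
        then have "\<exists>u\<in>S. le u a1 \<and> le u w" using xw by simp
        then show ?thesis using D2[OF JA' JA1 Jw] a'(2) xw(3) a'(3) by blast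
      next
        case False
        then have "x = a'" using xw by blast
        then have "\<exists>u\<in>S. le u a' \<and> le u w" using xw by simp
        then show ?thesis using D'[OF JA1 JA' Jw] a'(2) xw(3) a'(3) by blast
      qed
    qed
    obtain c where c: "c \<in> A" "c \<in> B" using nAB by blast
    obtain \<alpha> where al: "maxin le A \<alpha>" "le c \<alpha>" using ex_max[OF AS c(1)] by blast
    obtain \<beta> where be: "maxin le B \<beta>" "le c \<beta>" using ex_max[OF BS c(2)] by blast
    have Jbe: "maxin le (A\<union>B) \<beta>" using mJB be by blast
    have cS: "c \<in> S" using c AS by blast
    have a'A: "a' \<in> A" using a' unfolding maxin_def by blast
    have b1A': "b1 \<noteq> a'" using b1A a'A by blast
    have beA1: "\<beta> \<noteq> a1" using be a1B unfolding maxin_def by blast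
    show False
    proof (cases "\<beta> = a'")
      case True
      then have "maxin le B a'" using be by simp
      then have "{a'} \<subseteq> {x. maxin le B x}" by blast
      from Fp[OF B this _ b1(1)] b1A'
      obtain w where w: "maxin le B w" "w \<noteq> a'" "\<exists>u\<in>S. le u a' \<and> le u w"
        by blast
      have Jw: "maxin le (A\<union>B) w" using mJB w(1) by blast
      have "w \<noteq> a1" using w a1B unfolding maxin_def by blast
      then show False using D'[OF JA1 JA' Jw] a'(2) w(2) a'(3) w(3) by blast
    next
      case False
      have lab: "\<exists>u\<in>S. le u \<alpha> \<and> le u \<beta>" using cS al be by blast
      have "\<alpha> \<in> {a1,a'}" using MA al by blast
      then show False
      proof
        assume "\<alpha> = a1"
        then show False using D2[OF JA' JA1 Jbe] lab a'(2,3) beA1 False by blast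
      next
        assume "\<alpha> \<in> {a'}"
        then have "\<alpha> = a'" by blast
        then show False using D'[OF JA1 JA' Jbe] lab a'(2,3) beA1 False by blast
      qed
    qed
  qed
  have "A = dn S le a1"
  proof
    show "A \<subseteq> dn S le a1"
    proof
      fix z assume z: "z \<in> A"
      obtain w where "maxin le A w" "le z w" using ex_max[OF AS z] by blast
      then show "z \<in> dn S le a1" using uniq z AS by (auto simp: dn_def)
    qed
    show "dn S le a1 \<subseteq> A" using ci_down[OF A, of a1] a1 unfolding maxin_def dn_def by blast
  qed
  then show ?thesis using mJA a1 by blast
qed

end

context fp begin

lemma pi_elem: "p \<in> Pi_pairs S le \<Longrightarrow> \<exists>A B. p = {A,B} \<and> A \<in> conn_ideals S le \<and> B \<in> conn_ideals S le \<and> intersect_nontrivially A B"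
  unfolding Pi_pairs_def by blast

lemma pi_intro: "A \<in> conn_ideals S le \<Longrightarrow> B \<in> conn_ideals S le \<Longrightarrow> intersect_nontrivially A B \<Longrightarrow> {A,B} \<in> Pi_pairs S le"
  unfolding Pi_pairs_def by blast

lemma img_sub: "Union ` Pi_pairs S le \<subseteq> conn_ideals S le - dn S le ` S"
proof
  fix J assume "J \<in> Union ` Pi_pairs S le"
  then obtain q where q: "q \<in> Pi_pairs S le" "J = \<Union>q" by blast
  obtain A B where AB0: "q = {A,B}" "A \<in> conn_ideals S le" "B \<in> conn_ideals S le" "intersect_nontrivially A B"
    using pi_elem[OF q(1)] by blast
  have AB: "J = A \<union> B" "A \<in> conn_ideals S le" "B \<in> conn_ideals S le" "intersect_nontrivially A B"
    using AB0 q by auto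
  have i: "A \<inter> B \<noteq> {}" "\<not> A \<subseteq> B" "\<not> B \<subseteq> A" using AB(4) unfolding intersect_nontrivially_def by auto
  have "J \<in> conn_ideals S le" using union_conn[OF AB(2,3) i(1)] AB(1) by simp
  moreover have "J \<notin> dn S le ` S"
  proof
    assume "J \<in> dn S le ` S"
    then obtain p where p: "p \<in> S" "J = dn S le p" by blast
    have pp: "p \<in> dn S le p" using p(1) refl by (simp add: dn_def)
    have sub: "X \<subseteq> J" if "X \<in> {A,B}" for X using that AB(1) by blast
    have "p \<in> A \<union> B" using pp p(2) AB(1) by simp
    then show False
    proof
      assume pA: "p \<in> A"
      have "B \<subseteq> A"
      proof
        fix z assume "z \<in> B"
        then have "z \<in> dn S le p" using p(2) AB(1) by blast
        then show "z \<in> A" using ci_down[OF AB(2) pA] by (simp add: dn_def)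
      qed
      then show False using i by blast
    next
      assume pB: "p \<in> B"
      have "A \<subseteq> B"
      proof
        fix z assume "z \<in> A"
        then have "z \<in> dn S le p" using p(2) AB(1) by blast
        then show "z \<in> B" using ci_down[OF AB(3) pB] by (simp add: dn_def)
      qed
      then show False using i by blast
    qed
  qed
  ultimately show "J \<in> conn_ideals S le - dn S le ` S" by blast
qed

lemma surj: "conn_ideals S le - dn S le ` S \<subseteq> Union ` Pi_pairs S le"
proof
  fix J assume J: "J \<in> conn_ideals S le - dn S le ` S"
  have JC: "J \<in> conn_ideals S le" and Jn: "\<forall>p\<in>S. J \<noteq> dn S le p" using J by auto
  have JS: "J \<subseteq> S" using ci_sub JC .
  obtain p where p: "p \<in> J" using JC unfolding conn_ideals_def by blast
  have pS: "p \<in> S" using p JS by blast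
  have P0: "dn S le p \<in> conn_ideals S le \<and> dn S le p \<subset> J"
    using dn_conn[OF pS] ci_down[OF JC p] Jn pS by (auto simp: dn_def)
  have "\<exists>A. (A \<in> conn_ideals S le \<and> A \<subset> J) \<and> (\<forall>K. K \<in> conn_ideals S le \<and> K \<subset> J \<longrightarrow> card K \<le> card A)"
  proof (rule ex_has_greatest_nat[where b="Suc (card J)"])
    show "dn S le p \<in> conn_ideals S le \<and> dn S le p \<subset> J" by (rule P0)
    have "finite J" using JS fin finite_subset by blast
    then show "\<forall>K. K \<in> conn_ideals S le \<and> K \<subset> J \<longrightarrow> card K < Suc (card J)"
      by (auto simp: less_Suc_eq_le intro: card_mono)
  qed
  then obtain A where A: "A \<in> conn_ideals S le" "A \<subset> J"
    and Amax: "\<forall>K. K \<in> conn_ideals S le \<and> K \<subset> J \<longrightarrow> card K \<le> card A" by blast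
  obtain a where a: "a \<in> A" using A unfolding conn_ideals_def by blast
  obtain k where k: "k \<in> J" "k \<notin> A" using A by blast
  have down: "\<forall>z\<in>A. \<forall>t\<in>J. le t z \<longrightarrow> t \<in> A" using ci_down[OF A(1)] JS by blast
  obtain u v where uv: "u \<in> A" "v \<in> J" "v \<notin> A" "le u v"
    using cut_edge[OF JC _ a k down] A by blast
  have vS: "v \<in> S" using uv JS by blast
  have uS: "u \<in> S" using uv A(1) ci_sub by blast
  define B where "B = dn S le v"
  have BC: "B \<in> conn_ideals S le" using dn_conn[OF vS] B_def by simp
  have uB: "u \<in> B" using uS uv B_def by (simp add: dn_def)
  have vB: "v \<in> B" using vS refl B_def by (simp add: dn_def)
  have ABC: "A \<union> B \<in> conn_ideals S le" using union_conn[OF A(1) BC] uv uB by blast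
  have BJ: "B \<subseteq> J" using ci_down[OF JC uv(2)] B_def by (auto simp: dn_def)
  have ABJ: "A \<union> B = J"
  proof (rule ccontr)
    assume "A \<union> B \<noteq> J"
    then have "A \<union> B \<subset> J" using A BJ by blast
    then have "card (A \<union> B) \<le> card A" using Amax ABC by blast
    moreover have "card A < card (A \<union> B)"
    proof (rule psubset_card_mono)
      show "finite (A \<union> B)" using ABC ci_sub fin finite_subset by metis
      show "A \<subset> A \<union> B" using vB uv by blast
    qed
    ultimately show False by simp
  qed
  have "intersect_nontrivially A B"
    unfolding intersect_nontrivially_def
  proof (intro conjI)
    show "A \<inter> B \<noteq> {}" using uv uB by blast
    show "\<not> A \<subseteq> B"
    proof
      assume "A \<subseteq> B" then have "J = dn S le v" using ABJ B_def by blast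
      then show False using Jn vS by blast
    qed
    show "\<not> B \<subseteq> A" using vB uv by blast
  qed
  then have "{A,B} \<in> Pi_pairs S le" using pi_intro A(1) BC by blast
  moreover have "\<Union>{A,B} = J" using ABJ by simp
  ultimately show "J \<in> Union ` Pi_pairs S le" by (metis image_eqI)
qed

lemma inj_ff:
  assumes n1: "\<not> induced_subposet {0::nat,1,2,3} P1_le S le"
    and n2: "\<not> induced_subposet {0::nat,1,2,3,4} P2_le S le"
    and n3: "\<not> induced_subposet {0::nat,1,2,3} P3_le S le"
  shows "inj_on Union (Pi_pairs S le)"
proof (rule inj_onI)
  fix p q assume p: "p \<in> Pi_pairs S le" and q: "q \<in> Pi_pairs S le" and pq: "\<Union>p = \<Union>q"
  obtain A B where AB: "p = {A,B}" "A \<in> conn_ideals S le" "B \<in> conn_ideals S le" "intersect_nontrivially A B"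
    using pi_elem[OF p] by blast
  obtain C D where CD: "q = {C,D}" "C \<in> conn_ideals S le" "D \<in> conn_ideals S le" "intersect_nontrivially C D"
    using pi_elem[OF q] by blast
  have sym: "intersect_nontrivially Y X" if "intersect_nontrivially X Y" for X Y
    using that unfolding intersect_nontrivially_def by blast
  define J where "J = A \<union> B"
  have J2: "J = C \<union> D" using pq AB CD J_def by simp
  obtain a where a: "A = dn S le a" "maxin le J a" using principal_pair[OF n1 n2 n3 AB(2,3,4)] J_def by blast
  obtain b where b: "B = dn S le b" "maxin le J b"
    using principal_pair[OF n1 n2 n3 AB(3,2) sym[OF AB(4)]] J_def by (metis Un_commute)
  obtain c where c: "C = dn S le c" "maxin le J c" using principal_pair[OF n1 n2 n3 CD(2,3,4)] J2 by blast
  obtain d where d: "D = dn S le d" "maxin le J d"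
    using principal_pair[OF n1 n2 n3 CD(3,2) sym[OF CD(4)]] J2 by (metis Un_commute)
  have key: "x = a \<or> x = b" if x: "maxin le J x" for x
  proof -
    have "x \<in> J" using x unfolding maxin_def by blast
    then have "le x a \<and> a \<in> J \<or> le x b \<and> b \<in> J" using a b J_def unfolding dn_def maxin_def by blast
    then show ?thesis using x unfolding maxin_def by blast
  qed
  have "C \<noteq> D" using CD(4) unfolding intersect_nontrivially_def by blast
  then have "c \<noteq> d" using c d by blast
  have "c = a \<and> d = b \<or> c = b \<and> d = a" using key[OF c(2)] key[OF d(2)] \<open>c \<noteq> d\<close> by blast
  then show "p = q" using AB(1) CD(1) a(1) b(1) c(1) d(1) by auto
qed

end

context fp begin

lemma noinj: "p1 \<in> Pi_pairs S le \<Longrightarrow> p2 \<in> Pi_pairs S le \<Longrightarrow> p1 \<noteq> p2 \<Longrightarrow> \<Union>p1 = \<Union>p2 \<Longrightarrow> \<not> inj_on Union (Pi_pairs S le)"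
  by (meson inj_onD)

lemma inint: "x \<in> X \<Longrightarrow> x \<in> Y \<Longrightarrow> y \<in> X \<Longrightarrow> y \<notin> Y \<Longrightarrow> z \<in> Y \<Longrightarrow> z \<notin> X \<Longrightarrow> intersect_nontrivially X Y"
  unfolding intersect_nontrivially_def by blast

lemma memI: "x \<in> S \<Longrightarrow> le x p \<Longrightarrow> x \<in> dn S le p" by (simp add: dn_def)
lemma memN: "\<not> le x p \<Longrightarrow> x \<notin> dn S le p" by (simp add: dn_def)
lemma ne_dn: "x \<in> X \<Longrightarrow> x \<notin> Y \<Longrightarrow> X \<noteq> Y" by blast
lemma ne_int: "x \<in> X \<Longrightarrow> x \<in> Y \<Longrightarrow> X \<inter> Y \<noteq> {}" by blast

lemma getI: "\<forall>q\<in>Q. \<forall>q'\<in>Q. le (\<iota> q) (\<iota> q') \<longleftrightarrow> R q q' \<Longrightarrow> q\<in>Q \<Longrightarrow> q'\<in>Q \<Longrightarrow> le (\<iota> q) (\<iota> q') \<longleftrightarrow> R q q'"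
  by blast

lemma P1_noinj: assumes "induced_subposet {0::nat,1,2,3} P1_le S le" shows "\<not> inj_on Union (Pi_pairs S le)"
proof -
  obtain \<iota> where i: "\<iota> ` {0::nat,1,2,3} \<subseteq> S" "\<forall>q\<in>{0::nat,1,2,3}. \<forall>q'\<in>{0,1,2,3}. le (\<iota> q) (\<iota> q') \<longleftrightarrow> P1_le q q'"
    using assms unfolding induced_subposet_def by (elim exE conjE) (rule that)
  define a b c d where "a = \<iota> 0" "b = \<iota> 1" "c = \<iota> 2" "d = \<iota> 3"
  have S: "a \<in> S" "b \<in> S" "c \<in> S" "d \<in> S" using i(1) a_b_c_d_def by auto
  have r0: "le c b" using getI[OF i(2), of 2 1] unfolding a_b_c_d_def by (simp add: P1_le_def)
  have r1: "le b a" using getI[OF i(2), of 1 0] unfolding a_b_c_d_def by (simp add: P1_le_def)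
  have r2: "le c a" using getI[OF i(2), of 2 0] unfolding a_b_c_d_def by (simp add: P1_le_def)
  have r3: "le c d" using getI[OF i(2), of 2 3] unfolding a_b_c_d_def by (simp add: P1_le_def)
  have r4: "\<not> le d a" using getI[OF i(2), of 3 0] unfolding a_b_c_d_def by (simp add: P1_le_def)
  have r5: "\<not> le a d" using getI[OF i(2), of 0 3] unfolding a_b_c_d_def by (simp add: P1_le_def)
  have r6: "\<not> le d b" using getI[OF i(2), of 3 1] unfolding a_b_c_d_def by (simp add: P1_le_def)
  have r7: "\<not> le b d" using getI[OF i(2), of 1 3] unfolding a_b_c_d_def by (simp add: P1_le_def)
  have r8: "\<not> le a b" using getI[OF i(2), of 0 1] unfolding a_b_c_d_def by (simp add: P1_le_def)
  note r = r0 r1 r2 r3 r4 r5 r6 r7 r8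
  have m: "\<And>x p. x \<in> dn S le p \<longleftrightarrow> x \<in> S \<and> le x p" by (simp add: dn_def)
  have Ca: "dn S le a \<in> conn_ideals S le" and Cb: "dn S le b \<in> conn_ideals S le" and Cd: "dn S le d \<in> conn_ideals S le"
    using dn_conn S by auto
  have ca: "c \<in> dn S le a" "b \<in> dn S le a" "a \<in> dn S le a" "c \<in> dn S le b" "c \<in> dn S le d"
    "b \<in> dn S le b" "d \<in> dn S le d" using memI S r refl by auto
  have cn: "a \<notin> dn S le d" "a \<notin> dn S le b" "d \<notin> dn S le a" "b \<notin> dn S le d"
    using memN r by auto
  have Cbd: "dn S le b \<union> dn S le d \<in> conn_ideals S le"
    using union_conn[OF Cb Cd ne_int[OF ca(4,5)]] .
  have I1: "intersect_nontrivially (dn S le a) (dn S le d)"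
    by (rule inint[of c _ _ a d]) (use ca cn in auto)
  have I2: "intersect_nontrivially (dn S le a) (dn S le b \<union> dn S le d)"
    by (rule inint[of b _ _ a d]) (use ca cn in auto)
  have p1: "{dn S le a, dn S le d} \<in> Pi_pairs S le" using pi_intro[OF Ca Cd I1] .
  have p2: "{dn S le a, dn S le b \<union> dn S le d} \<in> Pi_pairs S le" using pi_intro[OF Ca Cbd I2] .
  have "dn S le b \<subseteq> dn S le a" using trans S r unfolding dn_def by blast
  then have U: "\<Union>{dn S le a, dn S le d} = \<Union>{dn S le a, dn S le b \<union> dn S le d}" by auto
  have N1: "dn S le d \<noteq> dn S le a" using ne_dn[of a "dn S le a" "dn S le d"] ca cn by blast
  have N2: "dn S le d \<noteq> dn S le b \<union> dn S le d" using ne_dn[of b "dn S le b \<union> dn S le d" "dn S le d"] ca cn by blast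
  have NE: "{dn S le a, dn S le d} \<noteq> {dn S le a, dn S le b \<union> dn S le d}" by (rule ne_dn[where x="dn S le d"]) (use N1 N2 in blast)+
  show ?thesis by (rule noinj[OF p1 p2 NE U])
qed

lemma P3_noinj: assumes "induced_subposet {0::nat,1,2,3} P3_le S le" shows "\<not> inj_on Union (Pi_pairs S le)"
proof -
  obtain \<iota> where i: "\<iota> ` {0::nat,1,2,3} \<subseteq> S" "\<forall>q\<in>{0::nat,1,2,3}. \<forall>q'\<in>{0,1,2,3}. le (\<iota> q) (\<iota> q') \<longleftrightarrow> P3_le q q'"
    using assms unfolding induced_subposet_def by (elim exE conjE) (rule that)
  define c x y z where "c = \<iota> 0" "x = \<iota> 1" "y = \<iota> 2" "z = \<iota> 3"
  have S: "c \<in> S" "x \<in> S" "y \<in> S" "z \<in> S" using i(1) c_x_y_z_def by auto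
  have r0: "le c x" using getI[OF i(2), of 0 1] unfolding c_x_y_z_def by (simp add: P3_le_def)
  have r1: "le c y" using getI[OF i(2), of 0 2] unfolding c_x_y_z_def by (simp add: P3_le_def)
  have r2: "le c z" using getI[OF i(2), of 0 3] unfolding c_x_y_z_def by (simp add: P3_le_def)
  have r3: "\<not> le x y" using getI[OF i(2), of 1 2] unfolding c_x_y_z_def by (simp add: P3_le_def)
  have r4: "\<not> le y x" using getI[OF i(2), of 2 1] unfolding c_x_y_z_def by (simp add: P3_le_def)
  have r5: "\<not> le x z" using getI[OF i(2), of 1 3] unfolding c_x_y_z_def by (simp add: P3_le_def)
  have r6: "\<not> le z x" using getI[OF i(2), of 3 1] unfolding c_x_y_z_def by (simp add: P3_le_def)
  have r7: "\<not> le y z" using getI[OF i(2), of 2 3] unfolding c_x_y_z_def by (simp add: P3_le_def)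
  have r8: "\<not> le z y" using getI[OF i(2), of 3 2] unfolding c_x_y_z_def by (simp add: P3_le_def)
  note r = r0 r1 r2 r3 r4 r5 r6 r7 r8
  have m: "\<And>w p. w \<in> dn S le p \<longleftrightarrow> w \<in> S \<and> le w p" by (simp add: dn_def)
  have Cx: "dn S le x \<in> conn_ideals S le" and Cy: "dn S le y \<in> conn_ideals S le" and Cz: "dn S le z \<in> conn_ideals S le"
    using dn_conn S by auto
  have ca: "c \<in> dn S le x" "c \<in> dn S le y" "c \<in> dn S le z" "x \<in> dn S le x" "y \<in> dn S le y" "z \<in> dn S le z"
    using memI S r refl by auto
  have cn: "x \<notin> dn S le y" "x \<notin> dn S le z" "y \<notin> dn S le x" "y \<notin> dn S le z" "z \<notin> dn S le x" "z \<notin> dn S le y"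
    using memN r by auto
  have Cxy: "dn S le x \<union> dn S le y \<in> conn_ideals S le"
    using union_conn[OF Cx Cy ne_int[OF ca(1,2)]] .
  have Cyz: "dn S le y \<union> dn S le z \<in> conn_ideals S le"
    using union_conn[OF Cy Cz ne_int[OF ca(2,3)]] .
  have I1: "intersect_nontrivially (dn S le x \<union> dn S le y) (dn S le z)"
    by (rule inint[of c _ _ x z]) (use ca cn in auto)
  have I2: "intersect_nontrivially (dn S le x) (dn S le y \<union> dn S le z)"
    by (rule inint[of c _ _ x z]) (use ca cn in auto)
  have p1: "{dn S le x \<union> dn S le y, dn S le z} \<in> Pi_pairs S le" using pi_intro[OF Cxy Cz I1] .
  have p2: "{dn S le x, dn S le y \<union> dn S le z} \<in> Pi_pairs S le" using pi_intro[OF Cx Cyz I2] .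
  have U: "\<Union>{dn S le x \<union> dn S le y, dn S le z} = \<Union>{dn S le x, dn S le y \<union> dn S le z}" by auto
  have N1: "dn S le x \<union> dn S le y \<noteq> dn S le x" using ne_dn[of y "dn S le x \<union> dn S le y" "dn S le x"] ca cn by blast
  have N2: "dn S le x \<union> dn S le y \<noteq> dn S le y \<union> dn S le z" using ne_dn[of x "dn S le x \<union> dn S le y" "dn S le y \<union> dn S le z"] ca cn by blast
  have NE: "{dn S le x \<union> dn S le y, dn S le z} \<noteq> {dn S le x, dn S le y \<union> dn S le z}" by (rule ne_dn[where x="dn S le x \<union> dn S le y"]) (use N1 N2 in blast)+
  show ?thesis by (rule noinj[OF p1 p2 NE U])
qed

lemma P2_noinj: assumes "induced_subposet {0::nat,1,2,3,4} P2_le S le" shows "\<not> inj_on Union (Pi_pairs S le)"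
proof -
  obtain \<iota> where i: "\<iota> ` {0::nat,1,2,3,4} \<subseteq> S" "\<forall>q\<in>{0::nat,1,2,3,4}. \<forall>q'\<in>{0,1,2,3,4}. le (\<iota> q) (\<iota> q') \<longleftrightarrow> P2_le q q'"
    using assms unfolding induced_subposet_def by (elim exE conjE) (rule that)
  define e f g h k where "e = \<iota> 0" "f = \<iota> 1" "g = \<iota> 2" "h = \<iota> 3" "k = \<iota> 4"
  have S: "e \<in> S" "f \<in> S" "g \<in> S" "h \<in> S" "k \<in> S" using i(1) e_f_g_h_k_def by auto
  have r0: "le f e" using getI[OF i(2), of 1 0] unfolding e_f_g_h_k_def by (simp add: P2_le_def)
  have r1: "le f g" using getI[OF i(2), of 1 2] unfolding e_f_g_h_k_def by (simp add: P2_le_def)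
  have r2: "le h g" using getI[OF i(2), of 3 2] unfolding e_f_g_h_k_def by (simp add: P2_le_def)
  have r3: "le h k" using getI[OF i(2), of 3 4] unfolding e_f_g_h_k_def by (simp add: P2_le_def)
  have r4: "\<not> le e g" using getI[OF i(2), of 0 2] unfolding e_f_g_h_k_def by (simp add: P2_le_def)
  have r5: "\<not> le g e" using getI[OF i(2), of 2 0] unfolding e_f_g_h_k_def by (simp add: P2_le_def)
  have r6: "\<not> le e k" using getI[OF i(2), of 0 4] unfolding e_f_g_h_k_def by (simp add: P2_le_def)
  have r7: "\<not> le k e" using getI[OF i(2), of 4 0] unfolding e_f_g_h_k_def by (simp add: P2_le_def)
  have r8: "\<not> le g k" using getI[OF i(2), of 2 4] unfolding e_f_g_h_k_def by (simp add: P2_le_def)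
  have r9: "\<not> le k g" using getI[OF i(2), of 4 2] unfolding e_f_g_h_k_def by (simp add: P2_le_def)
  note r = r0 r1 r2 r3 r4 r5 r6 r7 r8 r9
  have m: "\<And>w p. w \<in> dn S le p \<longleftrightarrow> w \<in> S \<and> le w p" by (simp add: dn_def)
  have Ce: "dn S le e \<in> conn_ideals S le" and Cg: "dn S le g \<in> conn_ideals S le" and Ck: "dn S le k \<in> conn_ideals S le"
    using dn_conn S by auto
  have ca: "f \<in> dn S le e" "f \<in> dn S le g" "h \<in> dn S le g" "h \<in> dn S le k" "e \<in> dn S le e" "g \<in> dn S le g" "k \<in> dn S le k"
    using memI S r refl by auto
  have cn: "e \<notin> dn S le g" "e \<notin> dn S le k" "g \<notin> dn S le e" "g \<notin> dn S le k" "k \<notin> dn S le e" "k \<notin> dn S le g"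
    using memN r by auto
  have Ceg: "dn S le e \<union> dn S le g \<in> conn_ideals S le"
    using union_conn[OF Ce Cg ne_int[OF ca(1,2)]] .
  have Cgk: "dn S le g \<union> dn S le k \<in> conn_ideals S le"
    using union_conn[OF Cg Ck ne_int[OF ca(3,4)]] .
  have I1: "intersect_nontrivially (dn S le e \<union> dn S le g) (dn S le g \<union> dn S le k)"
    by (rule inint[of g _ _ e k]) (use ca cn in auto)
  have I2: "intersect_nontrivially (dn S le e) (dn S le g \<union> dn S le k)"
    by (rule inint[of f _ _ e g]) (use ca cn in auto)
  have p1: "{dn S le e \<union> dn S le g, dn S le g \<union> dn S le k} \<in> Pi_pairs S le" using pi_intro[OF Ceg Cgk I1] .
  have p2: "{dn S le e, dn S le g \<union> dn S le k} \<in> Pi_pairs S le" using pi_intro[OF Ce Cgk I2] .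
  have U: "\<Union>{dn S le e \<union> dn S le g, dn S le g \<union> dn S le k} = \<Union>{dn S le e, dn S le g \<union> dn S le k}" by auto
  have N1: "dn S le e \<union> dn S le g \<noteq> dn S le e" using ne_dn[of g "dn S le e \<union> dn S le g" "dn S le e"] ca cn by blast
  have N2: "dn S le e \<union> dn S le g \<noteq> dn S le g \<union> dn S le k" using ne_dn[of e "dn S le e \<union> dn S le g" "dn S le g \<union> dn S le k"] ca cn by blast
  have NE: "{dn S le e \<union> dn S le g, dn S le g \<union> dn S le k} \<noteq> {dn S le e, dn S le g \<union> dn S le k}" by (rule ne_dn[where x="dn S le e \<union> dn S le g"]) (use N1 N2 in blast)+
  show ?thesis by (rule noinj[OF p1 p2 NE U])
qed

lemma ci_iff_inj: "ci_poset S le \<longleftrightarrow> inj_on Union (Pi_pairs S le)"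
proof -
  have fC: "finite (conn_ideals S le)"
    by (rule finite_subset[of _ "Pow S"]) (use fin ci_sub in auto)
  have fP: "finite (Pi_pairs S le)"
  proof (rule finite_subset[of _ "Pow (Pow S)"])
    show "Pi_pairs S le \<subseteq> Pow (Pow S)" unfolding Pi_pairs_def using ci_sub by blast
  qed (use fin in auto)
  have NP: "conn_ideals S le - dn S le ` S = Union ` Pi_pairs S le" using img_sub surj by blast
  have sub: "dn S le ` S \<subseteq> conn_ideals S le" using dn_conn by blast
  have injd: "inj_on (dn S le) S"
  proof (rule inj_onI)
    fix p q assume "p \<in> S" "q \<in> S" "dn S le p = dn S le q"
    then have "p \<in> dn S le q" "q \<in> dn S le p" using refl by (auto simp: dn_def)
    then show "p = q" using antisym by (auto simp: dn_def)
  qed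
  have c1: "card (dn S le ` S) = card S" using card_image[OF injd] .
  have "conn_ideals S le = dn S le ` S \<union> (conn_ideals S le - dn S le ` S)" using sub by blast
  then have "card (conn_ideals S le) = card (dn S le ` S) + card (conn_ideals S le - dn S le ` S)"
    using card_Un_disjoint[of "dn S le ` S" "conn_ideals S le - dn S le ` S"] fC
    by (metis Diff_disjoint finite_Diff finite_Un)
  then have cc: "card (conn_ideals S le) = card S + card (Union ` Pi_pairs S le)" using c1 NP by simp
  have "ci_poset S le \<longleftrightarrow> card (Union ` Pi_pairs S le) = card (Pi_pairs S le)"
    unfolding ci_poset_def cc by simp
  also have "\<dots> \<longleftrightarrow> inj_on Union (Pi_pairs S le)" by (rule inj_on_iff_eq_card[OF fP, symmetric])
  finally show ?thesis .
qed

end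

theorem theorem10p5:
  fixes S :: "'a set" and le :: "'a \<Rightarrow> 'a \<Rightarrow> bool"
  assumes "finite_poset S le"
  shows "ci_poset S le \<longleftrightarrow>
           \<not> induced_subposet {0::nat, 1, 2, 3} P1_le S le \<and>
           \<not> induced_subposet {0::nat, 1, 2, 3, 4} P2_le S le \<and>
           \<not> induced_subposet {0::nat, 1, 2, 3} P3_le S le"
proof -
  interpret fp S le by unfold_locales (rule assms)
  show ?thesis
  proof
    assume "ci_poset S le"
    then have I: "inj_on Union (Pi_pairs S le)" using ci_iff_inj by simp
    show "\<not> induced_subposet {0::nat, 1, 2, 3} P1_le S le \<and>
           \<not> induced_subposet {0::nat, 1, 2, 3, 4} P2_le S le \<and>
           \<not> induced_subposet {0::nat, 1, 2, 3} P3_le S le"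
      using I P1_noinj P2_noinj P3_noinj by metis
  next
    assume H: "\<not> induced_subposet {0::nat, 1, 2, 3} P1_le S le \<and>
           \<not> induced_subposet {0::nat, 1, 2, 3, 4} P2_le S le \<and>
           \<not> induced_subposet {0::nat, 1, 2, 3} P3_le S le"
    then have "inj_on Union (Pi_pairs S le)" using inj_ff by simp
    then show "ci_poset S le" using ci_iff_inj by simp
  qed
qed



end
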